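(* Let $P(z^1,\dots,z^d)$ be a polynomial in $d$ variables with real coefficients. The $N\times N$ matrix $P(W^{(1)},\dots,W^{(d)})$ has full rank $N$ if and only if the constant term of $P$ is nonzero.
   Context: For $k=1,\dots,d$, $a_k=x^k_0<\dots<x^k_{n_k}=b_k$ is a partition of $[a_k,b_k]$ with $n_k\ge1$, $l^k_j$ its Lagrange basis polynomials, and $\hat Z^{(k)}$ the $(n_k+1)\times(n_k+1)$ matrix with $\hat Z^{(k)}_{j,i}=(l^k_i)'(x^k_j)$. $N=(n_1+1)\cdots(n_d+1)$ and $W^{(\alpha)}=I_{n_1+1}\otimes\dots\otimes I_{n_{\alpha-1}+1}\otimes\hat Z^{(\alpha)}\otimes I_{n_{\alpha+1}+1}\otimes\dots\otimes I_{n_d+1}$ (these matrices pairwise commute, so $P(W^{(1)},\dots,W^{(d)})$ is well defined, the constant term being multiplied by the $N\times N$ identity). *)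

theory Defs
  imports "Jordan_Normal_Form.DL_Rank" "HOL-Library.Poly_Mapping"
    "HOL-Computational_Algebra.Polynomial"
begin

definition lagrange_basis :: "(nat \<Rightarrow> real) \<Rightarrow> nat \<Rightarrow> nat \<Rightarrow> real poly" where
  "lagrange_basis x n i =
     (\<Prod>m\<in>{0..n} - {i}. Polynomial.smult (inverse (x i - x m)) [:- x m, 1:])"

definition Zhat :: "(nat \<Rightarrow> real) \<Rightarrow> nat \<Rightarrow> real mat" where
  "Zhat x n = mat (n + 1) (n + 1)
     (\<lambda>(j, i). poly (pderiv (lagrange_basis x n i)) (x j))"

definition kron :: "real mat \<Rightarrow> real mat \<Rightarrow> real mat" where
  "kron A B = mat (dim_row A * dim_row B) (dim_col A * dim_col B)
     (\<lambda>(i, j). A $$ (i div dim_row B, j div dim_col B) * B $$ (i mod dim_row B, j mod dim_col B))"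

definition kron_list :: "real mat list \<Rightarrow> real mat" where
  "kron_list Ms = foldr kron Ms (1\<^sub>m 1)"

definition Wmat :: "nat \<Rightarrow> (nat \<Rightarrow> nat) \<Rightarrow> (nat \<Rightarrow> nat \<Rightarrow> real) \<Rightarrow> nat \<Rightarrow> real mat" where
  "Wmat d n x \<alpha> = kron_list
     (map (\<lambda>k. if k = \<alpha> then Zhat (x k) (n k) else 1\<^sub>m (n k + 1)) [1..<d + 1])"

definition mat_prod_list :: "nat \<Rightarrow> real mat list \<Rightarrow> real mat" where
  "mat_prod_list N Ms = foldr (*) Ms (1\<^sub>m N)"

text \<open>Polynomials in variables z^1..z^d: map from exponent vectors (nat =>0 nat)
  to real coefficients.\<close>
definition monoW :: "nat \<Rightarrow> (nat \<Rightarrow> nat) \<Rightarrow> (nat \<Rightarrow> nat \<Rightarrow> real)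
    \<Rightarrow> (nat \<Rightarrow>\<^sub>0 nat) \<Rightarrow> real mat" where
  "monoW d n x m = mat_prod_list (\<Prod>k\<in>{1..d}. n k + 1)
     (map (\<lambda>k. Wmat d n x k ^\<^sub>m Poly_Mapping.lookup m k) [1..<d + 1])"

definition eval_at_W :: "nat \<Rightarrow> (nat \<Rightarrow> nat) \<Rightarrow> (nat \<Rightarrow> nat \<Rightarrow> real)
    \<Rightarrow> ((nat \<Rightarrow>\<^sub>0 nat) \<Rightarrow>\<^sub>0 real) \<Rightarrow> real mat" where
  "eval_at_W d n x P =
     mat (\<Prod>k\<in>{1..d}. n k + 1) (\<Prod>k\<in>{1..d}. n k + 1)
       (\<lambda>(i, j). \<Sum>m\<in>Poly_Mapping.keys P. Poly_Mapping.lookup P m * monoW d n x m $$ (i, j))"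

end

theory Submission
  imports Defs
begin

lemma sum_shift_ivl: "sum (f::nat\<Rightarrow>real) {m..<m+b} = (\<Sum>q<b. f (m+q))"
  by (induction b) (auto simp: add.commute)

lemma sum_div_mod_split:
  fixes f :: "nat \<Rightarrow> real"
  shows "(\<Sum>l<a*b. f l) = (\<Sum>p<a. \<Sum>q<b. f (p*b+q))"
proof -
  have "(\<Sum>l<a*b. f l) = (\<Sum>p<a. sum f {p*b..<p*b+b})"
    by (rule sum.nat_group[symmetric])
  also have "\<dots> = (\<Sum>p<a. \<Sum>q<b. f (p*b+q))"
    by (simp add: sum_shift_ivl)
  finally show ?thesis .
qed

lemma kron_carrier: "A \<in> carrier_mat a a \<Longrightarrow> B \<in> carrier_mat b b \<Longrightarrow> kron A B \<in> carrier_mat (a*b) (a*b)"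
  by (simp add: kron_def)

lemma kron_index: "A \<in> carrier_mat a a \<Longrightarrow> B \<in> carrier_mat b b \<Longrightarrow> i < a*b \<Longrightarrow> j < a*b \<Longrightarrow>
  kron A B $$ (i,j) = A $$ (i div b, j div b) * B $$ (i mod b, j mod b)"
  by (simp add: kron_def)

lemma kron_mult:
  assumes A: "A \<in> carrier_mat a a" and C: "C \<in> carrier_mat a a"
    and B: "B \<in> carrier_mat b b" and D: "D \<in> carrier_mat b b" and b: "b > 0"
  shows "kron A B * kron C D = kron (A*C) (B*D)"
proof (rule eq_matI)
  show "dim_row (kron A B * kron C D) = dim_row (kron (A*C) (B*D))"
    using A B C D by (simp add: kron_def)
  show "dim_col (kron A B * kron C D) = dim_col (kron (A*C) (B*D))"
    using A B C D by (simp add: kron_def)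
  fix i j assume i: "i < dim_row (kron (A*C) (B*D))" and j: "j < dim_col (kron (A*C) (B*D))"
  then have i': "i < a*b" and j': "j < a*b" using A B C D by (auto simp: kron_def)
  have id: "i div b < a" "j div b < a" "i mod b < b" "j mod b < b"
    using i' j' b by (auto simp: less_mult_imp_div_less)
  have "(kron A B * kron C D) $$ (i,j) = (\<Sum>l<a*b. kron A B $$ (i,l) * kron C D $$ (l,j))"
    using A B C D i' j' by (simp add: kron_def scalar_prod_def atLeast0LessThan)
  also have "\<dots> = (\<Sum>p<a. \<Sum>q<b. kron A B $$ (i,p*b+q) * kron C D $$ (p*b+q,j))"
    by (rule sum_div_mod_split)
  also have "\<dots> = (\<Sum>p<a. \<Sum>q<b. (A $$ (i div b, p) * C $$ (p, j div b)) * (B $$ (i mod b, q) * D $$ (q, j mod b)))"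
  proof (intro sum.cong refl)
    fix p q assume p: "p \<in> {..<a}" and q: "q \<in> {..<b}"
    have pq: "p*b+q < a*b" using p q
    proof -
      have "p*b+q < (p+1)*b" using q by simp
      also have "\<dots> \<le> a*b" using p by (intro mult_le_mono1) simp
      finally show ?thesis .
    qed
    show "kron A B $$ (i,p*b+q) * kron C D $$ (p*b+q,j) = (A $$ (i div b, p) * C $$ (p, j div b)) * (B $$ (i mod b, q) * D $$ (q, j mod b))"
      using kron_index[OF A B i' pq] kron_index[OF C D pq j'] q by simp
  qed
  also have "\<dots> = (\<Sum>p<a. A $$ (i div b, p) * C $$ (p, j div b)) * (\<Sum>q<b. B $$ (i mod b, q) * D $$ (q, j mod b))"
    by (simp add: sum_product)
  also have "\<dots> = (A*C) $$ (i div b, j div b) * (B*D) $$ (i mod b, j mod b)"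
    using A B C D id by (simp add: scalar_prod_def atLeast0LessThan)
  also have "\<dots> = kron (A*C) (B*D) $$ (i,j)"
    using A B C D i' j' by (simp add: kron_def)
  finally show "(kron A B * kron C D) $$ (i,j) = kron (A*C) (B*D) $$ (i,j)" .
qed


lemma kron_one: assumes "b > 0" shows "kron (1\<^sub>m a) (1\<^sub>m b) = 1\<^sub>m (a*b)"
proof (rule eq_matI)
  fix i j assume i: "i < dim_row (1\<^sub>m (a*b) :: real mat)" and j: "j < dim_col (1\<^sub>m (a*b) :: real mat)"
  then have i': "i < a*b" and j': "j < a*b" by auto
  have id: "i div b < a" "j div b < a" "i mod b < b" "j mod b < b"
    using i' j' assms by (auto simp: less_mult_imp_div_less)
  have "(i div b = j div b \<and> i mod b = j mod b) = (i = j)"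
    by (metis div_mult_mod_eq)
  then show "kron (1\<^sub>m a) (1\<^sub>m b) $$ (i,j) = (1\<^sub>m (a*b) :: real mat) $$ (i,j)"
    using id i' j' by (auto simp: kron_def)
qed (auto simp: kron_def)

lemma kron_list_Cons: "kron_list (M # Ms) = kron M (kron_list Ms)"
  by (simp add: kron_list_def)

lemma kron_list_carrier:
  assumes "\<And>k. k \<in> set ks \<Longrightarrow> f k \<in> carrier_mat (s k) (s k)"
  shows "kron_list (map f ks) \<in> carrier_mat (prod_list (map s ks)) (prod_list (map s ks))"
  using assms by (induction ks) (auto simp: kron_list_Cons intro!: kron_carrier, simp add: kron_list_def)

lemma kron_list_mult:
  assumes "\<And>k. k \<in> set ks \<Longrightarrow> f k \<in> carrier_mat (s k) (s k)"
    and "\<And>k. k \<in> set ks \<Longrightarrow> g k \<in> carrier_mat (s k) (s k)"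
    and "\<And>k. k \<in> set ks \<Longrightarrow> s k > 0"
  shows "kron_list (map f ks) * kron_list (map g ks) = kron_list (map (\<lambda>k. f k * g k) ks)"
  using assms
proof (induction ks)
  case Nil
  then show ?case by (simp add: kron_list_def)
next
  case (Cons k ks)
  have pos: "prod_list (map s ks) > 0" using Cons.prems(3) by (induction ks) auto
  show ?case
    unfolding list.map kron_list_Cons
    by (subst kron_mult[OF _ _ kron_list_carrier kron_list_carrier pos])
       (use Cons in auto)
qed

lemma kron_list_one:
  assumes "\<And>k. k \<in> set ks \<Longrightarrow> s k > 0"
  shows "kron_list (map (\<lambda>k. 1\<^sub>m (s k)) ks) = 1\<^sub>m (prod_list (map s ks))"
  using assms
proof (induction ks)
  case Nil
  then show ?case by (simp add: kron_list_def)
next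
  case (Cons k ks)
  have pos: "prod_list (map s ks) > 0" using Cons.prems by (induction ks) auto
  show ?case using Cons kron_one[OF pos] by (simp add: kron_list_Cons)
qed

lemma kron_upper:
  assumes A: "A \<in> carrier_mat a a" and B: "B \<in> carrier_mat b b"
    and "upper_triangular A" "upper_triangular B"
  shows "upper_triangular (kron A B)"
proof -
  { fix i j assume i: "i < a*b" and ji: "j < i"
    then have j: "j < a*b" by simp
    have b: "b > 0" using i by (cases b) auto
    have id: "i div b < a" "j div b < a" "i mod b < b" "j mod b < b"
      using i j b by (auto simp: less_mult_imp_div_less)
    have "j div b \<le> i div b" using ji by (simp add: div_le_mono)
    then consider "j div b < i div b" | "j div b = i div b \<and> j mod b < i mod b"
      using ji by (metis div_mult_mod_eq le_neq_implies_less add_less_cancel_left nat_less_le)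
    then have "kron A B $$ (i,j) = 0"
      using assms id i j by (cases) (auto simp: kron_def upper_triangular_def)
  }
  then show ?thesis using A B by (auto simp: upper_triangular_def kron_def)
qed

lemma kron_list_upper:
  assumes "\<And>k. k \<in> set ks \<Longrightarrow> f k \<in> carrier_mat (s k) (s k)"
    and "\<And>k. k \<in> set ks \<Longrightarrow> upper_triangular (f k)"
  shows "upper_triangular (kron_list (map f ks))"
  using assms
proof (induction ks)
  case Nil
  then show ?case by (simp add: kron_list_def upper_triangular_def)
next
  case (Cons k ks)
  show ?case unfolding list.map kron_list_Cons
    by (rule kron_upper[OF _ kron_list_carrier]) (use Cons in auto)
qed

lemma kron_list_diag0:
  assumes "\<And>k. k \<in> set ks \<Longrightarrow> f k \<in> carrier_mat (s k) (s k)"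
    and "kk \<in> set ks" and "\<And>i. i < s kk \<Longrightarrow> f kk $$ (i,i) = 0"
    and "i < prod_list (map s ks)"
  shows "kron_list (map f ks) $$ (i,i) = 0"
  using assms
proof (induction ks arbitrary: i)
  case Nil
  then show ?case by simp
next
  case (Cons k ks)
  let ?b = "prod_list (map s ks)"
  have i: "i < s k * ?b" using Cons.prems by simp
  have b: "?b > 0" using i by (cases ?b) auto
  have id: "i div ?b < s k" "i mod ?b < ?b"
    using i b by (auto simp: less_mult_imp_div_less)
  have e: "kron_list (map f (k#ks)) $$ (i,i) = f k $$ (i div ?b, i div ?b) * kron_list (map f ks) $$ (i mod ?b, i mod ?b)"
    using kron_index[OF _ kron_list_carrier[of ks f s] i i] Cons.prems(1) by (simp add: kron_list_Cons)
  show ?case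
  proof (cases "k = kk")
    case True
    then show ?thesis using e id Cons.prems by simp
  next
    case False
    then have "kron_list (map f ks) $$ (i mod ?b, i mod ?b) = 0"
      using Cons.IH[of "i mod ?b"] Cons.prems id by auto
    then show ?thesis using e by simp
  qed
qed


definition Vmat :: "(nat \<Rightarrow> real) \<Rightarrow> nat \<Rightarrow> real mat" where
  "Vmat xs n = mat (n+1) (n+1) (\<lambda>(j,p). xs j ^ p)"

definition Dmat :: "nat \<Rightarrow> real mat" where
  "Dmat n = mat (n+1) (n+1) (\<lambda>(p,q). if q = Suc p then real q else 0)"

lemma strict_nodes:
  assumes "\<forall>j<n. (xs::nat\<Rightarrow>real) j < xs (Suc j)" "i < j" "j \<le> n"
  shows "xs i < xs j"
  using assms(2,3)
proof (induction j)
  case 0 then show ?case by simp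
next
  case (Suc j)
  show ?case
  proof (cases "i = j")
    case True then show ?thesis using assms(1) Suc by simp
  next
    case False then show ?thesis using Suc assms(1) by (metis less_Suc_eq Suc_leD Suc_le_lessD order.strict_trans)
  qed
qed

lemma inj_nodes:
  assumes "\<forall>j<n. (xs::nat\<Rightarrow>real) j < xs (Suc j)"
  shows "inj_on xs {0..n}"
proof (rule inj_onI)
  fix i j assume "i \<in> {0..n}" "j \<in> {0..n}" "xs i = xs j"
  then show "i = j" using strict_nodes[OF assms, of i j] strict_nodes[OF assms, of j i]
    by (metis atLeastAtMost_iff less_irrefl nat_neq_iff)
qed

lemma poly_zero_nodes:
  assumes "\<forall>j<n. (xs::nat\<Rightarrow>real) j < xs (Suc j)" "degree p \<le> n"
    and "\<And>j. j \<le> n \<Longrightarrow> poly p (xs j) = 0"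
  shows "p = 0"
proof (rule poly_eqI_degree[where A = "xs ` {0..n}"])
  have "card (xs ` {0..n}) = n + 1" using card_image[OF inj_nodes[OF assms(1)]] by simp
  then show "degree p < card (xs ` {0..n})" "degree (0::real poly) < card (xs ` {0..n})"
    using assms(2) by auto
  fix y assume "y \<in> xs ` {0..n}" then show "poly p y = poly 0 y" using assms(3) by auto
qed

lemma lagrange_nodes:
  assumes "\<forall>j<n. (xs::nat\<Rightarrow>real) j < xs (Suc j)" "i \<le> n" "j \<le> n"
  shows "poly (lagrange_basis xs n i) (xs j) = (if i = j then 1 else 0)"
proof -
  have inj: "inj_on xs {0..n}" by (rule inj_nodes[OF assms(1)])
  have e: "poly (lagrange_basis xs n i) (xs j) = (\<Prod>m\<in>{0..n} - {i}. inverse (xs i - xs m) * (xs j - xs m))"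
    unfolding lagrange_basis_def poly_prod by (simp add: algebra_simps)
  show ?thesis
  proof (cases "i = j")
    case True
    have "(\<Prod>m\<in>{0..n} - {i}. inverse (xs i - xs m) * (xs j - xs m)) = (\<Prod>m\<in>{0..n} - {i}. 1)"
    proof (intro prod.cong refl)
      fix m assume "m \<in> {0..n} - {i}"
      then have "xs i \<noteq> xs m" using inj assms(2) by (auto dest: inj_onD)
      then show "inverse (xs i - xs m) * (xs j - xs m) = 1" using True by simp
    qed
    then show ?thesis using e True by simp
  next
    case False
    have "j \<in> {0..n} - {i}" using False assms by auto
    then have "(\<Prod>m\<in>{0..n} - {i}. inverse (xs i - xs m) * (xs j - xs m)) = 0"
      by (intro prod_zero) auto
    then show ?thesis using e False by simp
  qed
qed

lemma lagrange_degree: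
  assumes "i \<le> n"
  shows "degree (lagrange_basis xs n i) \<le> n"
proof -
  have "degree (lagrange_basis xs n i) \<le> sum (degree \<circ> (\<lambda>m. Polynomial.smult (inverse (xs i - xs m)) [:- xs m, 1:])) ({0..n} - {i})"
    unfolding lagrange_basis_def by (rule degree_prod_sum_le) simp
  also have "\<dots> \<le> sum (\<lambda>m. 1) ({0..n} - {i})"
    by (intro sum_mono) (simp add: degree_smult_le)
  also have "\<dots> = n" using assms by simp
  finally show ?thesis .
qed

lemma pderiv_sum': "pderiv (sum f A) = (\<Sum>x\<in>A. pderiv (f x))"
  by (induction A rule: infinite_finite_induct) (auto simp: pderiv_add)

lemma interp_power:
  assumes "\<forall>j<n. (xs::nat\<Rightarrow>real) j < xs (Suc j)" "q \<le> n"
  shows "(\<Sum>i\<in>{0..n}. Polynomial.smult (xs i ^ q) (lagrange_basis xs n i)) = monom 1 q"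
proof -
  let ?p = "(\<Sum>i\<in>{0..n}. Polynomial.smult (xs i ^ q) (lagrange_basis xs n i)) - monom 1 q"
  have "degree (\<Sum>i\<in>{0..n}. Polynomial.smult (xs i ^ q) (lagrange_basis xs n i)) \<le> n"
    by (intro degree_sum_le) (auto intro: order.trans[OF degree_smult_le] lagrange_degree)
  moreover have "degree (monom (1::real) q) \<le> n" using assms(2) by (simp add: degree_monom_eq)
  ultimately have "degree ?p \<le> n" by (meson degree_diff_le)
  moreover have "poly ?p (xs j) = 0" if j: "j \<le> n" for j
  proof -
    have "poly (\<Sum>i\<in>{0..n}. Polynomial.smult (xs i ^ q) (lagrange_basis xs n i)) (xs j)
        = (\<Sum>i\<in>{0..n}. xs i ^ q * (if i = j then 1 else 0))"
      by (simp add: poly_sum lagrange_nodes[OF assms(1) _ j])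
    also have "\<dots> = xs j ^ q" using j by (simp add: if_distrib[of "\<lambda>t. _ * t"] cong: if_cong)
    finally show ?thesis by (simp add: poly_monom)
  qed
  ultimately have "?p = 0" by (rule poly_zero_nodes[OF assms(1)])
  then show ?thesis by simp
qed

lemma Zhat_V:
  assumes "\<forall>j<n. (xs::nat\<Rightarrow>real) j < xs (Suc j)"
  shows "Zhat xs n * Vmat xs n = Vmat xs n * Dmat n"
proof (rule eq_matI)
  fix j q assume j: "j < dim_row (Vmat xs n * Dmat n)" and q: "q < dim_col (Vmat xs n * Dmat n)"
  then have j': "j \<le> n" and q': "q \<le> n" by (auto simp: Vmat_def Dmat_def)
  have "(Zhat xs n * Vmat xs n) $$ (j,q) = (\<Sum>i\<in>{0..n}. poly (pderiv (lagrange_basis xs n i)) (xs j) * xs i ^ q)"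
    using j' q' by (simp add: Zhat_def Vmat_def scalar_prod_def atLeastLessThanSuc_atLeastAtMost)
  also have "\<dots> = poly (pderiv (\<Sum>i\<in>{0..n}. Polynomial.smult (xs i ^ q) (lagrange_basis xs n i))) (xs j)"
    by (simp add: pderiv_sum' pderiv_smult poly_sum mult.commute)
  also have "\<dots> = real q * xs j ^ (q - 1)"
    by (simp add: interp_power[OF assms q'] pderiv_monom poly_monom)
  also have "\<dots> = (Vmat xs n * Dmat n) $$ (j,q)"
  proof (cases q)
    case 0
    then show ?thesis using j' q' by (simp add: Vmat_def Dmat_def scalar_prod_def)
  next
    case (Suc q0)
    have "(Vmat xs n * Dmat n) $$ (j,q) = (\<Sum>p\<in>{0..<n+1}. xs j ^ p * (if q = Suc p then real q else 0))"
      using j' q' by (simp add: Vmat_def Dmat_def scalar_prod_def)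
    also have "\<dots> = (\<Sum>p\<in>{0..<n+1}. if p = q0 then xs j ^ q0 * real q else 0)"
      by (intro sum.cong refl) (auto simp: Suc)
    also have "\<dots> = xs j ^ q0 * real q" using q' Suc by simp
    finally show ?thesis using Suc by simp
  qed
  finally show "(Zhat xs n * Vmat xs n) $$ (j,q) = (Vmat xs n * Dmat n) $$ (j,q)" .
qed (auto simp: Zhat_def Vmat_def Dmat_def)

lemma Vmat_carrier: "Vmat xs n \<in> carrier_mat (n+1) (n+1)" by (simp add: Vmat_def)
lemma Dmat_carrier: "Dmat n \<in> carrier_mat (n+1) (n+1)" by (simp add: Dmat_def)
lemma Zhat_carrier: "Zhat xs n \<in> carrier_mat (n+1) (n+1)" by (simp add: Zhat_def)

lemma Dmat_upper: "upper_triangular (Dmat n)"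
  by (auto simp: upper_triangular_def Dmat_def)

lemma Dmat_diag: "i < n + 1 \<Longrightarrow> Dmat n $$ (i,i) = 0"
  by (simp add: Dmat_def)

lemma Vmat_det:
  assumes "\<forall>j<n. (xs::nat\<Rightarrow>real) j < xs (Suc j)"
  shows "det (Vmat xs n) \<noteq> 0"
proof
  assume "det (Vmat xs n) = 0"
  then obtain v where v: "v \<in> carrier_vec (n+1)" "v \<noteq> 0\<^sub>v (n+1)" "Vmat xs n *\<^sub>v v = 0\<^sub>v (n+1)"
    using det_0_iff_vec_prod_zero[OF Vmat_carrier] by blast
  let ?p = "\<Sum>q\<in>{0..n}. monom (v $ q) q"
  have "degree ?p \<le> n" by (intro degree_sum_le) (auto simp: degree_monom_le intro: order.trans[OF degree_monom_le])
  moreover have "poly ?p (xs j) = 0" if j: "j \<le> n" for j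
  proof -
    have "poly ?p (xs j) = (\<Sum>q\<in>{0..<n+1}. xs j ^ q * v $ q)"
      by (simp add: poly_sum poly_monom atLeastLessThanSuc_atLeastAtMost mult.commute)
    also have "\<dots> = (Vmat xs n *\<^sub>v v) $ j"
      using j v(1) by (simp add: Vmat_def mult_mat_vec_def scalar_prod_def)
    also have "\<dots> = 0" using v(3) j by simp
    finally show ?thesis .
  qed
  ultimately have p0: "?p = 0" by (rule poly_zero_nodes[OF assms])
  have "v = 0\<^sub>v (n+1)"
  proof (rule eq_vecI)
    fix q assume "q < dim_vec (0\<^sub>v (n+1) :: real vec)"
    then have q: "q \<le> n" by simp
    have "coeff ?p q = v $ q" using q by (simp add: coeff_sum)
    then show "v $ q = 0\<^sub>v (n+1) $ q" using p0 q by simp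
  qed (use v in simp)
  then show False using v(2) by simp
qed


lemma pow_comm:
  assumes A: "A \<in> carrier_mat N N" and B: "B \<in> carrier_mat N N" and K: "K \<in> carrier_mat N N"
    and c: "A * K = K * (B::real mat)"
  shows "A ^\<^sub>m e * K = K * B ^\<^sub>m e"
proof (induction e)
  case 0 then show ?case using A B K by simp
next
  case (Suc e)
  have "A ^\<^sub>m Suc e * K = A ^\<^sub>m e * (A * K)"
    using A K by (simp add: assoc_mult_mat[of _ N N _ N _ N])
  also have "\<dots> = (A ^\<^sub>m e * K) * B" using A B K c by (simp add: assoc_mult_mat[of _ N N _ N _ N])
  also have "\<dots> = K * (B ^\<^sub>m e * B)" using Suc B K by (simp add: assoc_mult_mat[of _ N N _ N _ N])
  also have "\<dots> = K * B ^\<^sub>m Suc e" by simp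
  finally show ?case .
qed

lemma mat_prod_list_carrier:
  assumes "\<And>k. k \<in> set ks \<Longrightarrow> a k \<in> carrier_mat N N"
  shows "mat_prod_list N (map a ks) \<in> carrier_mat N N"
  using assms by (induction ks) (auto simp: mat_prod_list_def intro!: mult_carrier_mat)

lemma mat_prod_list_comm:
  assumes "\<And>k. k \<in> set ks \<Longrightarrow> a k \<in> carrier_mat N N"
    and "\<And>k. k \<in> set ks \<Longrightarrow> b k \<in> carrier_mat N N"
    and K: "K \<in> carrier_mat N N"
    and "\<And>k. k \<in> set ks \<Longrightarrow> a k * K = K * (b k :: real mat)"
  shows "mat_prod_list N (map a ks) * K = K * mat_prod_list N (map b ks)"
  using assms(1,2,4)
proof (induction ks)
  case Nil then show ?case using K by (simp add: mat_prod_list_def)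
next
  case (Cons k ks)
  have ca: "mat_prod_list N (map a ks) \<in> carrier_mat N N" using Cons by (intro mat_prod_list_carrier) auto
  have cb: "mat_prod_list N (map b ks) \<in> carrier_mat N N" using Cons by (intro mat_prod_list_carrier) auto
  have ak: "a k \<in> carrier_mat N N" and bk: "b k \<in> carrier_mat N N" using Cons by auto
  have "mat_prod_list N (map a (k#ks)) * K = a k * (mat_prod_list N (map a ks) * K)"
    using ca ak K by (simp add: mat_prod_list_def assoc_mult_mat[of _ N N _ N _ N])
  also have "\<dots> = a k * (K * mat_prod_list N (map b ks))"
    using Cons by simp
  also have "\<dots> = (a k * K) * mat_prod_list N (map b ks)"
    using ca cb ak K by (simp add: assoc_mult_mat[of _ N N _ N _ N])
  also have "\<dots> = K * mat_prod_list N (map b (k#ks))"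
    using Cons cb bk K by (simp add: mat_prod_list_def assoc_mult_mat[of _ N N _ N _ N])
  finally show ?case .
qed

lemma upper_mult:
  assumes A: "A \<in> carrier_mat N N" and B: "B \<in> carrier_mat N N"
    and uA: "upper_triangular A" and uB: "upper_triangular (B :: real mat)"
  shows "upper_triangular (A * B)" "\<And>i. i < N \<Longrightarrow> (A * B) $$ (i,i) = A $$ (i,i) * B $$ (i,i)"
proof -
  { fix i j assume i: "i < N" and j: "j < N"
    have "(A * B) $$ (i,j) = (\<Sum>l\<in>{0..<N}. A $$ (i,l) * B $$ (l,j))"
      using A B i j by (simp add: scalar_prod_def) }
  note e = this
  show "upper_triangular (A * B)"
  proof (unfold upper_triangular_def, intro allI impI)
    fix i j assume i: "i < dim_row (A * B)" and ji: "j < i"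
    then have i': "i < N" using A by simp
    have "(\<Sum>l\<in>{0..<N}. A $$ (i,l) * B $$ (l,j)) = 0"
    proof (intro sum.neutral ballI)
      fix l assume l: "l \<in> {0..<N}"
      show "A $$ (i,l) * B $$ (l,j) = 0"
      proof (cases "l < i")
        case True then show ?thesis using uA A i' by (auto simp: upper_triangular_def)
      next
        case False then have "j < l" using ji by simp
        then show ?thesis using uB B l by (auto simp: upper_triangular_def)
      qed
    qed
    then show "(A * B) $$ (i,j) = 0" using e[OF i'] ji i' by simp
  qed
  fix i assume i: "i < N"
  have "(\<Sum>l\<in>{0..<N}. A $$ (i,l) * B $$ (l,i)) = (\<Sum>l\<in>{0..<N}. if l = i then A $$ (i,i) * B $$ (i,i) else 0)"
  proof (intro sum.cong refl)
    fix l assume l: "l \<in> {0..<N}"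
    show "A $$ (i,l) * B $$ (l,i) = (if l = i then A $$ (i,i) * B $$ (i,i) else 0)"
    proof (cases "l < i")
      case True then show ?thesis using uA A i by (auto simp: upper_triangular_def)
    next
      case False
      show ?thesis
      proof (cases "l = i")
        case False': False
        then have "i < l" using False by simp
        then show ?thesis using uB B l False' by (auto simp: upper_triangular_def)
      qed simp
    qed
  qed
  then show "(A * B) $$ (i,i) = A $$ (i,i) * B $$ (i,i)" using e[OF i i] i by simp
qed

lemma upper_one: "upper_triangular (1\<^sub>m N :: real mat)"
  by (auto simp: upper_triangular_def)

lemma upper_pow:
  assumes A: "A \<in> carrier_mat N N" and uA: "upper_triangular (A :: real mat)"
  shows "upper_triangular (A ^\<^sub>m e) \<and> (\<forall>i<N. (A ^\<^sub>m e) $$ (i,i) = (A $$ (i,i)) ^ e)"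
proof (induction e)
  case 0 then show ?case using A by (simp add: upper_one)
next
  case (Suc e)
  have c: "A ^\<^sub>m e \<in> carrier_mat N N" using A by simp
  show ?case using upper_mult[OF c A] Suc uA by simp
qed

lemma mat_prod_list_upper:
  assumes "\<And>k. k \<in> set ks \<Longrightarrow> b k \<in> carrier_mat N N"
    and "\<And>k. k \<in> set ks \<Longrightarrow> upper_triangular (b k :: real mat)"
  shows "upper_triangular (mat_prod_list N (map b ks)) \<and>
    (\<forall>i<N. mat_prod_list N (map b ks) $$ (i,i) = prod_list (map (\<lambda>k. b k $$ (i,i)) ks))"
  using assms
proof (induction ks)
  case Nil then show ?case by (simp add: mat_prod_list_def upper_one)
next
  case (Cons k ks)
  have cb: "mat_prod_list N (map b ks) \<in> carrier_mat N N" using Cons by (intro mat_prod_list_carrier) auto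
  have bk: "b k \<in> carrier_mat N N" "upper_triangular (b k)" using Cons by auto
  have IH: "upper_triangular (mat_prod_list N (map b ks))"
    "\<forall>i<N. mat_prod_list N (map b ks) $$ (i,i) = prod_list (map (\<lambda>k. b k $$ (i,i)) ks)"
    using Cons by auto
  have eq: "mat_prod_list N (map b (k#ks)) = b k * mat_prod_list N (map b ks)"
    by (simp add: mat_prod_list_def)
  show ?case unfolding eq using upper_mult[OF bk(1) cb bk(2) IH(1)] IH(2) by simp
qed


theorem mainTheorem10:
  fixes d :: nat and n :: "nat \<Rightarrow> nat" and a b :: "nat \<Rightarrow> real"
    and x :: "nat \<Rightarrow> nat \<Rightarrow> real"
    and P :: "(nat \<Rightarrow>\<^sub>0 nat) \<Rightarrow>\<^sub>0 real"
  assumes "\<forall>k\<in>{1..d}. n k \<ge> 1"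
    and "\<forall>k\<in>{1..d}. x k 0 = a k \<and> x k (n k) = b k"
    and "\<forall>k\<in>{1..d}. \<forall>j<n k. x k j < x k (Suc j)"
    and "\<forall>m\<in>Poly_Mapping.keys P. Poly_Mapping.keys m \<subseteq> {1..d}"
  shows "vec_space.rank (\<Prod>k\<in>{1..d}. n k + 1) (eval_at_W d n x P)
           = (\<Prod>k\<in>{1..d}. n k + 1)
         \<longleftrightarrow> Poly_Mapping.lookup P 0 \<noteq> 0"
proof -
  define ks where "ks = [1..<d+1]"
  define s where "s = (\<lambda>k. n k + 1)"
  define N where "N = (\<Prod>k\<in>{1..d}. n k + 1)"
  have setks: "set ks = {1..d}" unfolding ks_def by auto
  have NN: "prod_list (map s ks) = N"
    unfolding N_def s_def ks_def
    by (subst prod.distinct_set_conv_list[symmetric]) (auto intro: prod.cong)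
  have Npos: "N > 0" unfolding N_def by (intro prod_pos) auto
  have strict: "\<And>k. k \<in> set ks \<Longrightarrow> \<forall>j<n k. x k j < x k (Suc j)" using assms(3) setks by auto
  have spos: "\<And>k. s k > 0" unfolding s_def by simp
  define V where "V = (\<lambda>k. Vmat (x k) (n k))"
  define K where "K = kron_list (map V ks)"
  define Wp where "Wp = (\<lambda>\<alpha>. kron_list (map (\<lambda>k. if k = \<alpha> then Dmat (n k) else 1\<^sub>m (s k)) ks))"
  have Vc: "\<And>k. V k \<in> carrier_mat (s k) (s k)" unfolding V_def s_def by (rule Vmat_carrier)
  have Kc: "K \<in> carrier_mat N N"
    unfolding K_def NN[symmetric] by (rule kron_list_carrier) (use Vc in auto)
  have Wpfc: "\<And>\<alpha> k. (if k = \<alpha> then Dmat (n k) else 1\<^sub>m (s k)) \<in> carrier_mat (s k) (s k)"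
    unfolding s_def using Dmat_carrier by auto
  have Wfc: "\<And>\<alpha> k. (if k = \<alpha> then Zhat (x k) (n k) else 1\<^sub>m (n k + 1)) \<in> carrier_mat (s k) (s k)"
    unfolding s_def using Zhat_carrier by auto
  have Wpc: "\<And>\<alpha>. Wp \<alpha> \<in> carrier_mat N N"
    unfolding Wp_def NN[symmetric] by (rule kron_list_carrier) (use Wpfc in auto)
  have Wc: "\<And>\<alpha>. Wmat d n x \<alpha> \<in> carrier_mat N N"
    unfolding Wmat_def ks_def[symmetric] NN[symmetric] by (rule kron_list_carrier) (use Wfc in auto)
  have Wcomm: "Wmat d n x \<alpha> * K = K * Wp \<alpha>" for \<alpha>
  proof -
    have "Wmat d n x \<alpha> * K = kron_list (map (\<lambda>k. (if k = \<alpha> then Zhat (x k) (n k) else 1\<^sub>m (n k + 1)) * V k) ks)"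
      unfolding Wmat_def ks_def[symmetric] K_def
      by (rule kron_list_mult[where s = s]) (use Wfc Vc spos in auto)
    also have "\<dots> = kron_list (map (\<lambda>k. V k * (if k = \<alpha> then Dmat (n k) else 1\<^sub>m (s k))) ks)"
    proof (intro arg_cong[where f = kron_list] map_cong refl)
      fix k assume k: "k \<in> set ks"
      show "(if k = \<alpha> then Zhat (x k) (n k) else 1\<^sub>m (n k + 1)) * V k = V k * (if k = \<alpha> then Dmat (n k) else 1\<^sub>m (s k))"
        using Zhat_V[OF strict[OF k]] Vc[of k] by (auto simp: V_def s_def)
    qed
    also have "\<dots> = K * Wp \<alpha>"
      unfolding Wp_def K_def
      by (rule kron_list_mult[where s = s, symmetric]) (use Wpfc Vc spos in auto)
    finally show ?thesis .
  qed
  have Wpu: "upper_triangular (Wp \<alpha>)" for \<alpha>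
    unfolding Wp_def by (rule kron_list_upper[where s = s]) (use Wpfc in \<open>auto simp: Dmat_upper upper_one\<close>)
  have Wpd: "Wp \<alpha> $$ (i,i) = 0" if "\<alpha> \<in> set ks" "i < N" for \<alpha> i
    unfolding Wp_def
    by (rule kron_list_diag0[where s = s and kk = \<alpha>]) (use Wpfc that NN in \<open>auto simp: Dmat_diag s_def\<close>)
  define T where "T = (\<lambda>m. mat_prod_list N (map (\<lambda>k. Wp k ^\<^sub>m Poly_Mapping.lookup m k) ks))"
  have Tc: "T m \<in> carrier_mat N N" for m
    unfolding T_def by (rule mat_prod_list_carrier) (use Wpc in auto)
  have monoc: "monoW d n x m \<in> carrier_mat N N" for m
    unfolding monoW_def N_def[symmetric] by (rule mat_prod_list_carrier) (use Wc in auto)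
  have Tcomm: "monoW d n x m * K = K * T m" for m
    unfolding monoW_def N_def[symmetric] ks_def[symmetric] T_def
    by (rule mat_prod_list_comm[OF _ _ Kc]) (use Wc Wpc Kc Wcomm in \<open>auto intro: pow_comm\<close>)
  have Tu: "upper_triangular (T m) \<and> (\<forall>i<N. T m $$ (i,i) = prod_list (map (\<lambda>k. (Wp k $$ (i,i)) ^ Poly_Mapping.lookup m k) ks))" for m
  proof -
    have "\<And>k. upper_triangular (Wp k ^\<^sub>m Poly_Mapping.lookup m k) \<and>
      (\<forall>i<N. (Wp k ^\<^sub>m Poly_Mapping.lookup m k) $$ (i,i) = (Wp k $$ (i,i)) ^ Poly_Mapping.lookup m k)"
      by (rule upper_pow[OF Wpc Wpu])
    then show ?thesis unfolding T_def
      using mat_prod_list_upper[of ks "\<lambda>k. Wp k ^\<^sub>m Poly_Mapping.lookup m k" N] Wpc by auto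
  qed
  have Tdiag: "T m $$ (i,i) = (if m = 0 then 1 else 0)" if m: "m \<in> Poly_Mapping.keys P" and i: "i < N" for m i
  proof -
    have e: "T m $$ (i,i) = prod_list (map (\<lambda>k. 0 ^ Poly_Mapping.lookup m k) ks)"
      using Tu[of m] i Wpd[OF _ i] by (auto intro!: arg_cong[where f = prod_list])
    show ?thesis
    proof (cases "m = 0")
      case True
      have "(\<Prod>k\<leftarrow>ks. (1::real)) = 1" by (induction ks) auto
      then show ?thesis using e True by simp
    next
      case False
      then obtain k where k: "k \<in> Poly_Mapping.keys m" by (metis all_not_in_conv keys_eq_empty)
      then have "k \<in> set ks" using assms(4) m unfolding setks by blast
      moreover have "Poly_Mapping.lookup m k \<noteq> 0" using k by (simp add: in_keys_iff)
      ultimately have "prod_list (map (\<lambda>k. (0::real) ^ Poly_Mapping.lookup m k) ks) = 0"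
        by (auto simp: prod_list_zero_iff)
      then show ?thesis using e False by simp
    qed
  qed
  define c where "c = Poly_Mapping.lookup P 0"
  define TT where "TT = mat N N (\<lambda>(i,j). \<Sum>m\<in>Poly_Mapping.keys P. Poly_Mapping.lookup P m * T m $$ (i,j))"
  have TTc: "TT \<in> carrier_mat N N" by (simp add: TT_def)
  define E where "E = eval_at_W d n x P"
  have Edef: "E = mat N N (\<lambda>(i, j). \<Sum>m\<in>Poly_Mapping.keys P. Poly_Mapping.lookup P m * monoW d n x m $$ (i, j))"
    unfolding E_def eval_at_W_def N_def ..
  have Ec: "E \<in> carrier_mat N N" by (simp add: Edef)
  have md: "dim_row (monoW d n x m) = N" "dim_col (monoW d n x m) = N" for m using monoc[of m] by auto
  have Td: "dim_row (T m) = N" "dim_col (T m) = N" for m using Tc[of m] by auto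
  have EK: "E * K = K * TT"
  proof (rule eq_matI)
    fix i j assume i: "i < dim_row (K * TT)" and j: "j < dim_col (K * TT)"
    then have i': "i < N" and j': "j < N" using Kc TTc by auto
    have "(E * K) $$ (i,j) = (\<Sum>l\<in>{0..<N}. (\<Sum>m\<in>Poly_Mapping.keys P. Poly_Mapping.lookup P m * monoW d n x m $$ (i,l)) * K $$ (l,j))"
      using i' j' Kc by (simp add: Edef scalar_prod_def)
    also have "\<dots> = (\<Sum>m\<in>Poly_Mapping.keys P. Poly_Mapping.lookup P m * (\<Sum>l\<in>{0..<N}. monoW d n x m $$ (i,l) * K $$ (l,j)))"
      by (simp add: sum_distrib_left sum_distrib_right mult.assoc sum.swap[of _ "{0..<N}"])
    also have "\<dots> = (\<Sum>m\<in>Poly_Mapping.keys P. Poly_Mapping.lookup P m * (monoW d n x m * K) $$ (i,j))"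
      using i' j' Kc by (simp add: scalar_prod_def md)
    also have "\<dots> = (\<Sum>m\<in>Poly_Mapping.keys P. Poly_Mapping.lookup P m * (\<Sum>l\<in>{0..<N}. K $$ (i,l) * T m $$ (l,j)))"
      using i' j' Kc by (simp add: Tcomm scalar_prod_def Td)
    also have "\<dots> = (\<Sum>l\<in>{0..<N}. K $$ (i,l) * (\<Sum>m\<in>Poly_Mapping.keys P. Poly_Mapping.lookup P m * T m $$ (l,j)))"
      by (simp add: sum_distrib_left sum_distrib_right mult.assoc mult.left_commute sum.swap[of _ "{0..<N}"])
    also have "\<dots> = (K * TT) $$ (i,j)"
      using i' j' Kc by (simp add: TT_def scalar_prod_def)
    finally show "(E * K) $$ (i,j) = (K * TT) $$ (i,j)" .
  qed (use Ec Kc TTc in auto)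
  have TTu: "upper_triangular TT"
  proof -
    { fix i j assume "i < N" "j < i"
      then have "TT $$ (i,j) = 0" using Tu Td by (auto simp: TT_def upper_triangular_def intro!: sum.neutral) }
    then show ?thesis by (auto simp: upper_triangular_def TT_def)
  qed
  have TTd: "TT $$ (i,i) = c" if i: "i < N" for i
  proof -
    have "TT $$ (i,i) = (\<Sum>m\<in>Poly_Mapping.keys P. Poly_Mapping.lookup P m * (if m = 0 then 1 else 0))"
      using i Tdiag[OF _ i] by (simp add: TT_def)
    also have "\<dots> = c" by (simp add: c_def if_distrib[of "\<lambda>t. _ * t"] cong: if_cong) (simp add: in_keys_iff)
    finally show ?thesis .
  qed
  have detTT: "det TT = c ^ N"
  proof -
    have "det TT = prod_list (diag_mat TT)" by (rule det_upper_triangular[OF TTu TTc])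
    also have "diag_mat TT = replicate N c"
      using TTc TTd by (intro nth_equalityI) (auto simp: diag_mat_def)
    finally show ?thesis by simp
  qed
  have "\<exists>B. B \<in> carrier_mat (s k) (s k) \<and> V k * B = 1\<^sub>m (s k)" if k: "k \<in> set ks" for k
  proof -
    have "det (V k) \<noteq> 0" unfolding V_def by (rule Vmat_det[OF strict[OF k]])
    from det_non_zero_imp_unit[OF Vc this, of "()"] show ?thesis
      by (auto simp: Units_def ring_mat_def)
  qed
  then obtain Vi where Vi: "\<And>k. k \<in> set ks \<Longrightarrow> Vi k \<in> carrier_mat (s k) (s k) \<and> V k * Vi k = 1\<^sub>m (s k)"
    by metis
  define Ki where "Ki = kron_list (map Vi ks)"
  have Kic: "Ki \<in> carrier_mat N N"
    unfolding Ki_def NN[symmetric] by (rule kron_list_carrier) (use Vi in auto)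
  have "K * Ki = kron_list (map (\<lambda>k. V k * Vi k) ks)"
    unfolding K_def Ki_def by (rule kron_list_mult[where s = s]) (use Vc Vi spos in auto)
  also have "\<dots> = kron_list (map (\<lambda>k. 1\<^sub>m (s k)) ks)"
    by (intro arg_cong[where f = kron_list] map_cong refl) (use Vi in auto)
  also have "\<dots> = 1\<^sub>m N" using kron_list_one[of ks s] spos NN by simp
  finally have "det K * det Ki = 1" using det_mult[OF Kc Kic] by simp
  then have detK: "det K \<noteq> 0" by auto
  have "det E * det K = det K * det TT"
    using arg_cong[OF EK, of det] det_mult[OF Ec Kc] det_mult[OF Kc TTc] by simp
  then have detE: "det E = c ^ N" using detK detTT by simp
  have "det E \<noteq> 0 \<longleftrightarrow> c \<noteq> 0" using detE Npos by simp
  then show ?thesis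
    using vec_space.det_rank_iff[OF Ec] unfolding E_def N_def c_def by simp
qed

end
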